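(* Let $\ell\ge2$, $R_0^*\in SO(3)$, $(y_i,x_i)$ with $y_i=R_0^*x_i+\epsilon_i$ ($i=1,\dots,\ell$), $c_1^2,\dots,c_\ell^2\ge0$, and $\hat w_0\in\mathbb{S}^3$ a global minimizer of (TLS-Q). Let $\zeta=\lambda_{\min2}(\sum_{i=1}^\ell Q_i)/\lambda_{\min}(\sum_{i=1}^\ell Q_i)$ and assume $\zeta\ge\ell/(\ell-1)$ and, for every $i$, $$c_i^2>\hat w_0^\top Q_i\hat w_0+\|Q_i\hat w_0\|_2+\frac{|d_i|+d_i}{2},\quad d_i:=\frac{\sum_{k=1}^\ell\hat w_0^\top Q_k\hat w_0}{\ell}-\hat w_0^\top Q_i\hat w_0+\frac{\lambda_{\max}\big(\sum_{j\ne i}(Q_i-Q_j)\big)}{\zeta(\ell-1)}.$$ Let $\hat V_0\in\mathbb{R}^{4\times3}$ satisfy $\hat V_0^\top\hat w_0=0$, $\hat V_0^\top\hat V_0=I_3$, and $\hat V=[\hat V_0,\ \hat w_0]\in\mathbb{R}^{4\times4}$. Define $$\hat T_i:=\frac{\zeta-\frac{\ell}{\ell-1}}{\zeta}\hat V_0^\top Q_i\hat V_0+\frac{\sum_{j=1}^\ell\hat V_0^\top Q_j\hat V_0}{\zeta(\ell-1)}-\frac{\sum_{k=1}^\ell\hat w_0^\top Q_k\hat w_0}{\ell}I_3,\qquad \hat S_i:=\hat V\begin{bmatrix}\hat T_i&0\\0&0\end{bmatrix}\hat V^\top .$$ Then $\sum_{i=1}^\ell\hat S_i=\sum_{i=1}^\ell\big(Q_i-(\hat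 w_0^\top Q_i\hat w_0)I_4\big)$, $\hat S_i\succeq0$ for every $i$, and $\hat S_i+c_i^2I_4-Q_i\succ0$ for every $i$.
   Context: For $w=[w_1;w_2;w_3;w_4]\in\mathbb{S}^3$, $R(w)=\begin{bmatrix} w_1^2+w_2^2-w_3^2-w_4^2 & 2(w_2w_3-w_1w_4) & 2(w_2w_4+w_1w_3)\\ 2(w_2w_3+w_1w_4) & w_1^2+w_3^2-w_2^2-w_4^2 & 2(w_3w_4-w_1w_2)\\ 2(w_2w_4-w_1w_3) & 2(w_3w_4+w_1w_2) & w_1^2+w_4^2-w_2^2-w_3^2\end{bmatrix}\in SO(3)$. $Q_i$ is the unique symmetric $4\times4$ matrix with $w^\top Q_iw=\|y_i-R(w)x_i\|_2^2$ for all $w\in\mathbb{S}^3$. (TLS-Q) is $\min_{w_0\in\mathbb{S}^3}\sum_{i=1}^\ell\min\{w_0^\top Q_iw_0,c_i^2\}$. $\lambda_{\min},\lambda_{\min2},\lambda_{\max}$ denote smallest, second smallest (with multiplicity), largest eigenvalue. *)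

theory Defs
  imports "HOL-Analysis.Analysis" "HOL-Computational_Algebra.Polynomial"
begin

text \<open>Rotation matrix R(w) of a (unit) quaternion w = [w1;w2;w3;w4], components w$1,...,w$4.\<close>
definition rotq :: "real^4 \<Rightarrow> real^3^3" where
  "rotq w = (let w1 = w$1; w2 = w$2; w3 = w$3; w4 = w$4 in
     vector [vector [w1^2+w2^2-w3^2-w4^2, 2*(w2*w3-w1*w4), 2*(w2*w4+w1*w3)],
             vector [2*(w2*w3+w1*w4), w1^2+w3^2-w2^2-w4^2, 2*(w3*w4-w1*w2)],
             vector [2*(w2*w4-w1*w3), 2*(w3*w4+w1*w2), w1^2+w4^2-w2^2-w3^2]])"

definition Qmat :: "real^3 \<Rightarrow> real^3 \<Rightarrow> real^4^4" where
  "Qmat x y = (THE Q. transpose Q = Q \<and>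
      (\<forall>w::real^4. norm w = 1 \<longrightarrow> w \<bullet> (Q *v w) = (norm (y - rotq w *v x))^2))"

definition tls_obj :: "nat \<Rightarrow> (nat \<Rightarrow> real^4^4) \<Rightarrow> (nat \<Rightarrow> real) \<Rightarrow> real^4 \<Rightarrow> real" where
  "tls_obj l Q c2 w = (\<Sum>i=1..l. min (w \<bullet> (Q i *v w)) (c2 i))"

definition charpoly :: "real^'n^'n \<Rightarrow> real poly" where
  "charpoly A = det (\<chi> i j. (if i = j then [:0, 1:] else 0) - [:A $ i $ j:])"

definition eig_min :: "real^'n^'n \<Rightarrow> real" where
  "eig_min A = Min {t. poly (charpoly A) t = 0}"

definition eig_max :: "real^'n^'n \<Rightarrow> real" where
  "eig_max A = Max {t. poly (charpoly A) t = 0}"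

text \<open>Second smallest eigenvalue with multiplicity.\<close>
definition eig_min2 :: "real^'n^'n \<Rightarrow> real" where
  "eig_min2 A = (if order (eig_min A) (charpoly A) \<ge> 2 then eig_min A
                 else Min {t. poly (charpoly A) t = 0 \<and> t > eig_min A})"

definition psd :: "real^'n^'n \<Rightarrow> bool" where
  "psd A \<longleftrightarrow> transpose A = A \<and> (\<forall>x. 0 \<le> x \<bullet> (A *v x))"

definition pd :: "real^'n^'n \<Rightarrow> bool" where
  "pd A \<longleftrightarrow> transpose A = A \<and> (\<forall>x. x \<noteq> 0 \<longrightarrow> 0 < x \<bullet> (A *v x))"

definition idx43 :: "4 \<Rightarrow> 3" where
  "idx43 j = (if j = 1 then 1 else if j = 2 then 2 else 3)"

definition hcat :: "real^3^4 \<Rightarrow> real^4 \<Rightarrow> real^4^4" where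
  "hcat V w = (\<chi> i j. if j = 4 then w $ i else V $ i $ idx43 j)"

definition blk :: "real^3^3 \<Rightarrow> real^4^4" where
  "blk T = (\<chi> i j. if i = 4 \<or> j = 4 then 0 else T $ idx43 i $ idx43 j)"

end

theory Submission
  imports Defs
begin

lemma inner_mv_transpose: "(x::real^'n) \<bullet> (A *v y) = (transpose A *v x) \<bullet> y"
  by (metis dot_lmul_matrix transpose_matrix_vector)

lemma sym_inner: "transpose A = A \<Longrightarrow> (x::real^'n) \<bullet> (A *v y) = y \<bullet> (A *v x)"
  by (metis inner_mv_transpose inner_commute)

lemma qf_scale: "(c *\<^sub>R x) \<bullet> (A *v (c *\<^sub>R x)) = c^2 * (x \<bullet> (A *v (x::real^'n)))"
  by (simp add: matrix_vector_mult_scaleR power2_eq_square)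

lemma qf_add: "transpose A = A \<Longrightarrow>
  (x + t *\<^sub>R v) \<bullet> (A *v (x + t *\<^sub>R v)) = x \<bullet> (A *v x) + 2*t*(x \<bullet> (A *v v)) + t^2 * (v \<bullet> (A *v (v::real^'n)))"
  using sym_inner[of A x v]
  by (simp add: matrix_vector_right_distrib matrix_vector_mult_scaleR inner_add_left inner_add_right power2_eq_square algebra_simps)

lemma qf_all_from_sphere:
  assumes "\<forall>w. norm w = 1 \<longrightarrow> w \<bullet> (A *v w) = w \<bullet> (B *v (w::real^'n))"
  shows "x \<bullet> (A *v x) = x \<bullet> (B *v x)"
proof (cases "x = 0")
  case True then show ?thesis by simp
next
  case False
  define u where "u = (1 / norm x) *\<^sub>R x"
  have u: "norm u = 1" using False by (simp add: u_def)
  have x: "x = norm x *\<^sub>R u" using False by (simp add: u_def)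
  show ?thesis using assms u qf_scale x by metis
qed

lemma sym_eq_qf:
  fixes A B :: "real^'n^'n"
  assumes "transpose A = A" "transpose B = B" "\<forall>x. x \<bullet> (A *v x) = x \<bullet> (B *v x)"
  shows "A = B"
proof -
  have bil: "x \<bullet> (A *v y) = x \<bullet> (B *v y)" for x y
  proof -
    have "(x+y) \<bullet> (A *v (x+y)) = (x+y) \<bullet> (B *v (x+y))" using assms(3) by blast
    then have "x \<bullet> (A *v x) + 2*(x \<bullet> (A *v y)) + y \<bullet> (A *v y) = x \<bullet> (B *v x) + 2*(x \<bullet> (B *v y)) + y \<bullet> (B *v y)"
      using qf_add[OF assms(1), of x 1 y] qf_add[OF assms(2), of x 1 y] by simp
    then show ?thesis using assms(3)[rule_format, of x] assms(3)[rule_format, of y] by simp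
  qed
  show ?thesis
  proof (rule vec_eq_iff[THEN iffD2], intro allI, rule vec_eq_iff[THEN iffD2], intro allI)
    fix i j
    have "A $ i $ j = axis i 1 \<bullet> (A *v axis j 1)"
      by (simp add: matrix_vector_mult_basis inner_axis' column_def)
    also have "\<dots> = axis i 1 \<bullet> (B *v axis j 1)" by (rule bil)
    also have "\<dots> = B $ i $ j"
      by (simp add: matrix_vector_mult_basis inner_axis' column_def)
    finally show "A $ i $ j = B $ i $ j" .
  qed
qed

lemma stat_real:
  fixes m n a b d :: real
  assumes d: "d > 0" and h: "\<forall>t. \<bar>t\<bar> < d \<longrightarrow> m*(1+t^2*n) \<le> m + 2*t*b + t^2*a"
  shows "b = 0"
proof (rule ccontr)
  assume b: "b \<noteq> 0"
  define K where "K = \<bar>a - m*n\<bar> + 1"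
  have K: "K > 0" "\<bar>a - m*n\<bar> < K" unfolding K_def by auto
  define s where "s = min (d/2) (\<bar>b\<bar>/K)"
  have s: "s > 0" "s < d" "s \<le> \<bar>b\<bar>/K" using d b K unfolding s_def by auto
  define t where "t = (if b > 0 then -s else s)"
  have ta: "\<bar>t\<bar> = s" unfolding t_def using s by auto
  have tb: "t*b = - s * \<bar>b\<bar>" unfolding t_def using b by auto
  have "m*(1+t^2*n) \<le> m + 2*t*b + t^2*a" using h ta s by auto
  then have "0 \<le> 2*(t*b) + t^2*(a - m*n)" by (simp add: algebra_simps)
  moreover have "t^2*(a - m*n) \<le> s^2 * \<bar>a - m*n\<bar>"
  proof -
    have "t^2 = s^2" using ta by (metis power2_abs)
    then show ?thesis by (simp add: mult_left_mono)
  qed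
  moreover have "s^2 * \<bar>a - m*n\<bar> \<le> s^2 * K" using K by (simp add: mult_left_mono)
  moreover have "s^2 * K \<le> s * \<bar>b\<bar>"
  proof -
    have "s * K \<le> \<bar>b\<bar>" using s K by (simp add: pos_le_divide_eq)
    then have "s * (s*K) \<le> s * \<bar>b\<bar>" using s by (simp add: mult_left_mono)
    then show ?thesis by (simp add: power2_eq_square algebra_simps)
  qed
  ultimately have "0 \<le> 2*(t*b) + s * \<bar>b\<bar>" by linarith
  moreover have "s*\<bar>b\<bar> > 0" using s b by simp
  ultimately show False using tb by linarith
qed


lemma poly_det: "poly (det M) t = det (\<chi> i j. poly (M$i$j) t)"
  unfolding det_def poly_sum poly_mult poly_prod by simp

lemma poly_charpoly: "poly (charpoly A) t = det (mat t - A)"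
  unfolding charpoly_def poly_det
  by (rule arg_cong[where f=det], simp add: vec_eq_iff mat_def)

lemma det_eig: "det (mat t - A) = 0 \<longleftrightarrow> (\<exists>z. z \<noteq> 0 \<and> A *v z = t *\<^sub>R (z::real^'n))"
proof -
  have "det (mat t - A) \<noteq> 0 \<longleftrightarrow> (\<forall>z. (mat t - A) *v z = 0 \<longrightarrow> z = 0)"
    by (simp add: invertible_det_nz[symmetric] invertible_left_inverse matrix_left_invertible_ker)
  moreover have "(mat t - A) *v z = 0 \<longleftrightarrow> A *v z = t *\<^sub>R z" for z
  proof -
    have "mat t = t *\<^sub>R (mat 1 :: real^'n^'n)" by (simp add: vec_eq_iff mat_def)
    then have "(mat t - A) *v z = t *\<^sub>R z - A *v z"
      by (simp add: matrix_vector_mult_diff_rdistrib scaleR_matrix_vector_assoc[symmetric])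
    then show ?thesis by (metis right_minus_eq)
  qed
  ultimately show ?thesis by blast
qed

lemma root_iff: "poly (charpoly A) t = 0 \<longleftrightarrow> (\<exists>z. z \<noteq> 0 \<and> A *v z = t *\<^sub>R (z::real^'n))"
  using poly_charpoly det_eig by metis

lemma rayleigh_min:
  fixes A :: "real^'n^'n"
  shows "\<exists>x0. norm x0 = 1 \<and> (\<forall>x. (x0 \<bullet> (A *v x0)) * (norm x)^2 \<le> x \<bullet> (A *v x))"
proof -
  obtain k :: 'n where True by auto
  have ne: "sphere (0::real^'n) 1 \<noteq> {}" using norm_axis_1[of k] by (metis dist_0_norm empty_iff mem_sphere)
  have co: "continuous_on (sphere (0::real^'n) 1) (\<lambda>x. x \<bullet> (A *v x))"
    by (intro continuous_intros linear_continuous_on matrix_vector_mul_linear)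
  obtain x0 where x0: "x0 \<in> sphere 0 1" "\<forall>y\<in>sphere 0 1. x0 \<bullet> (A *v x0) \<le> y \<bullet> (A *v y)"
    using continuous_attains_inf[OF compact_sphere ne co] by blast
  have "(x0 \<bullet> (A *v x0)) * (norm x)^2 \<le> x \<bullet> (A *v x)" for x
  proof (cases "x = 0")
    case True then show ?thesis by simp
  next
    case False
    define u where "u = (1 / norm x) *\<^sub>R x"
    have u: "norm u = 1" using False by (simp add: u_def)
    have z: "x = norm x *\<^sub>R u" using False by (simp add: u_def)
    have "x \<bullet> (A *v x) = (norm x)^2 * (u \<bullet> (A *v u))" using z qf_scale by metis
    moreover have "x0 \<bullet> (A *v x0) \<le> u \<bullet> (A *v u)" using x0 u by auto
    moreover have "(x0 \<bullet> (A *v x0)) * (norm x)^2 \<le> (u \<bullet> (A *v u)) * (norm x)^2"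
      using calculation(2) by (rule mult_right_mono) simp
    ultimately show ?thesis by (simp add: mult.commute)
  qed
  then show ?thesis using x0 by auto
qed


lemma mv_neg: "(- A) *v x = - (A *v (x::real^'n))"
  by (simp add: vec_eq_iff matrix_vector_mult_def sum_negf)

lemma eig_from_stat:
  fixes A :: "real^'n^'n"
  assumes s: "transpose A = A" and x0: "norm x0 = 1"
    and h: "x0 \<bullet> (A *v (A *v x0 - (x0 \<bullet> (A *v x0)) *\<^sub>R x0)) = 0"
  shows "A *v x0 = (x0 \<bullet> (A *v x0)) *\<^sub>R x0"
proof -
  define m where "m = x0 \<bullet> (A *v x0)"
  define r where "r = A *v x0 - m *\<^sub>R x0"
  have xx: "x0 \<bullet> x0 = 1" using x0 by (metis power2_norm_eq_inner one_power2)
  have rx: "r \<bullet> x0 = 0" unfolding r_def m_def inner_diff_left inner_scaleR_left xx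
    by (simp add: inner_commute[of "A *v x0" x0])
  have "0 = x0 \<bullet> (A *v r)" using h unfolding r_def m_def by simp
  also have "\<dots> = r \<bullet> (A *v x0)" using sym_inner[OF s] by simp
  also have "\<dots> = r \<bullet> (r + m *\<^sub>R x0)" unfolding r_def by simp
  also have "\<dots> = r \<bullet> r" using rx by (simp add: inner_add_right)
  finally have "r = 0" by simp
  then show ?thesis unfolding r_def m_def by simp
qed

lemma stat_dir:
  fixes A :: "real^'n^'n"
  assumes s: "transpose A = A" and x0: "norm x0 = 1" and v: "x0 \<bullet> v = 0" and d: "d > 0"
    and h: "\<forall>t. \<bar>t\<bar> < d \<longrightarrow> (x0 \<bullet> (A *v x0)) * (norm (x0 + t *\<^sub>R v))^2 \<le> (x0 + t *\<^sub>R v) \<bullet> (A *v (x0 + t *\<^sub>R v))"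
  shows "x0 \<bullet> (A *v v) = 0"
proof -
  have xx: "x0 \<bullet> x0 = 1" using x0 by (metis power2_norm_eq_inner one_power2)
  have n: "(norm (x0 + t *\<^sub>R v))^2 = 1 + t^2 * (norm v)^2" for t
    unfolding power2_norm_eq_inner using v xx
    by (simp add: inner_add_left inner_add_right inner_commute power2_eq_square)
  show ?thesis
    apply (rule stat_real[OF d, where m="x0 \<bullet> (A *v x0)" and n="(norm v)^2" and a="v \<bullet> (A *v v)"])
    using h unfolding n qf_add[OF s] by simp
qed

lemma rayleigh_min_eig:
  fixes A :: "real^'n^'n"
  assumes s: "transpose A = A"
  shows "\<exists>x0. norm x0 = 1 \<and> A *v x0 = (x0 \<bullet> (A *v x0)) *\<^sub>R x0 \<and> (\<forall>x. (x0 \<bullet> (A *v x0)) * (norm x)^2 \<le> x \<bullet> (A *v x))"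
proof -
  obtain x0 where x0: "norm x0 = 1" "\<forall>x. (x0 \<bullet> (A *v x0)) * (norm x)^2 \<le> x \<bullet> (A *v x)"
    using rayleigh_min by blast
  have xx: "x0 \<bullet> x0 = 1" using x0 by (metis power2_norm_eq_inner one_power2)
  have "A *v x0 = (x0 \<bullet> (A *v x0)) *\<^sub>R x0"
  proof (rule eig_from_stat[OF s x0(1)], rule stat_dir[OF s x0(1) _ zero_less_one])
    show "x0 \<bullet> (A *v x0 - (x0 \<bullet> (A *v x0)) *\<^sub>R x0) = 0"
      unfolding inner_diff_right inner_scaleR_right xx by simp
    show "\<forall>t. \<bar>t\<bar> < 1 \<longrightarrow> x0 \<bullet> (A *v x0) * (norm (x0 + t *\<^sub>R (A *v x0 - (x0 \<bullet> (A *v x0)) *\<^sub>R x0)))\<^sup>2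
          \<le> (x0 + t *\<^sub>R (A *v x0 - (x0 \<bullet> (A *v x0)) *\<^sub>R x0)) \<bullet> (A *v (x0 + t *\<^sub>R (A *v x0 - (x0 \<bullet> (A *v x0)) *\<^sub>R x0)))"
      using x0(2) by blast
  qed
  then show ?thesis using x0 by blast
qed

lemma sym_eig_props:
  fixes A :: "real^'n^'n"
  assumes s: "transpose A = A"
  shows "charpoly A \<noteq> 0"
    and "finite {t. poly (charpoly A) t = 0}"
    and "\<forall>x. eig_min A * (norm x)^2 \<le> x \<bullet> (A *v x)"
    and "\<exists>z. norm z = 1 \<and> A *v z = eig_min A *\<^sub>R z"
    and "\<forall>t. poly (charpoly A) t = 0 \<longrightarrow> eig_min A \<le> t"
    and "\<forall>x. x \<bullet> (A *v x) \<le> eig_max A * (norm x)^2"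
proof -
  have root_ge: "m \<le> t" if H1: "\<forall>x. m * (norm x)^2 \<le> x \<bullet> (A *v x)" and H2: "poly (charpoly A) t = 0" for m t
  proof -
    obtain z where z: "z \<noteq> 0" "A *v z = t *\<^sub>R z" using H2 root_iff by blast
    have "m * (norm z)^2 \<le> t * (norm z)^2" using H1[rule_format, of z] z(2)
      by (simp add: power2_norm_eq_inner)
    then show ?thesis using z(1) by simp
  qed
  obtain x0 where x0: "norm x0 = 1" "A *v x0 = (x0 \<bullet> (A *v x0)) *\<^sub>R x0" "\<forall>x. (x0 \<bullet> (A *v x0)) * (norm x)^2 \<le> x \<bullet> (A *v x)"
    using rayleigh_min_eig[OF s] by blast
  have sn: "transpose (-A) = -A" using s by (metis transpose_scalar scaleR_minus1_left)
  obtain x1 where x1: "norm x1 = 1" "(-A) *v x1 = (x1 \<bullet> ((-A) *v x1)) *\<^sub>R x1" "\<forall>x. (x1 \<bullet> ((-A) *v x1)) * (norm x)^2 \<le> x \<bullet> ((-A) *v x)"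
    using rayleigh_min_eig[OF sn] by blast
  define M where "M = - (x1 \<bullet> ((-A) *v x1))"
  have Mb: "\<forall>x. x \<bullet> (A *v x) \<le> M * (norm x)^2" using x1(3) unfolding M_def
    by (simp add: mv_neg)
  have root_le: "t \<le> M" if H: "poly (charpoly A) t = 0" for t
  proof -
    obtain z where z: "z \<noteq> 0" "A *v z = t *\<^sub>R z" using H root_iff by blast
    have "t * (norm z)^2 \<le> M * (norm z)^2" using Mb[rule_format, of z] z(2)
      by (simp add: power2_norm_eq_inner)
    then show ?thesis using z(1) by simp
  qed
  show nz: "charpoly A \<noteq> 0"
  proof
    assume "charpoly A = 0"
    then have "M + 1 \<le> M" using root_le[of "M+1"] by simp
    then show False by simp
  qed
  show fin: "finite {t. poly (charpoly A) t = 0}" using poly_roots_finite[OF nz] .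
  define m where "m = x0 \<bullet> (A *v x0)"
  have mroot: "poly (charpoly A) m = 0" using root_iff x0 unfolding m_def
    by (metis norm_zero zero_neq_one)
  have em: "eig_min A = m" unfolding eig_min_def
    by (rule Min_eqI[OF fin]) (use mroot root_ge x0(3) m_def in auto)
  show "\<forall>x. eig_min A * (norm x)^2 \<le> x \<bullet> (A *v x)" using em x0(3) m_def by simp
  show "\<exists>z. norm z = 1 \<and> A *v z = eig_min A *\<^sub>R z" using em x0 m_def by metis
  show "\<forall>t. poly (charpoly A) t = 0 \<longrightarrow> eig_min A \<le> t" using em root_ge x0(3) m_def by auto
  have Mroot: "poly (charpoly A) M = 0" using root_iff x1 unfolding M_def
    by (metis norm_zero zero_neq_one mv_neg scaleR_minus_left minus_equation_iff)
  have "M \<le> eig_max A" unfolding eig_max_def using fin Mroot by auto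
  then show "\<forall>x. x \<bullet> (A *v x) \<le> eig_max A * (norm x)^2" using Mb
    by (meson mult_right_mono order_trans zero_le_power2)
qed

lemma charpoly_dvd:
  fixes A P :: "real^'n^'n"
  assumes j12: "ja \<noteq> jb"
    and e1: "\<forall>i. (A ** P)$i$ja = lam * P$i$ja" and e2: "\<forall>i. (A ** P)$i$jb = lam * P$i$jb"
  shows "[:-lam, 1:]^2 dvd charpoly A * det (\<chi> i j. [:P$i$j:])"
proof -
  define N :: "real poly^'n^'n" where "N = (\<chi> i j. (if i = j then [:0, 1:] else 0) - [:A $ i $ j:])"
  define L :: "real poly^'n^'n" where "L = (\<chi> i j. [:P$i$j:])"
  define G where "G = N ** L"
  define c where "c = [:-lam, 1:]"
  have dG: "det G = charpoly A * det L" unfolding G_def charpoly_def N_def det_mul by simp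
  have pe: "poly (G$i$j) t = t * P$i$j - (A ** P)$i$j" for i j t
  proof -
    have "poly (G$i$j) t = (\<Sum>k\<in>UNIV. ((if i = k then t else 0) - A$i$k) * P$k$j)"
      unfolding G_def N_def L_def matrix_matrix_mult_def by (simp add: poly_sum) (rule sum.cong, auto)
    also have "\<dots> = (\<Sum>k\<in>UNIV. (if i = k then t * P$k$j else 0) - A$i$k * P$k$j)"
      by (rule sum.cong) (auto simp: left_diff_distrib)
    also have "\<dots> = (\<Sum>k\<in>UNIV. (if i = k then t * P$k$j else 0)) - (\<Sum>k\<in>UNIV. A$i$k * P$k$j)"
      by (rule sum_subtractf)
    also have "\<dots> = t * P$i$j - (A ** P)$i$j" by (simp add: matrix_matrix_mult_def)
    finally show ?thesis .
  qed
  have col: "G$i$j = c * [:P$i$j:]" if "(\<forall>i. (A ** P)$i$j = lam * P$i$j)" for i j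
  proof -
    have "poly (G$i$j) = poly (c * [:P$i$j:])" using that by (simp add: fun_eq_iff pe c_def algebra_simps)
    then show ?thesis by (simp add: poly_eq_poly_eq_iff)
  qed
  define a where "a = (\<lambda>j. (\<chi> i. [:P$i$j:]) :: real poly^'n)"
  define r where "r = (\<lambda>j. transpose G $ j)"
  have T: "transpose G = (\<chi> j. if j = ja then c *s a j else (if j = jb then c *s a j else r j))"
    unfolding r_def a_def
    using col[OF e1] col[OF e2] by (simp add: vec_eq_iff transpose_def)
  have "det G = det (transpose G)" by simp
  also have "\<dots> = c * det (\<chi> j. if j = ja then a j else (if j = jb then c *s a j else r j))"
    unfolding T by (rule det_row_mul)
  also have "(\<chi> j. if j = ja then a j else (if j = jb then c *s a j else r j)) =
             (\<chi> j. if j = jb then c *s a j else (if j = ja then a j else r j))"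
    using j12 by (simp add: vec_eq_iff)
  also have "det \<dots> = c * det (\<chi> j. if j = jb then a j else (if j = ja then a j else r j))"
    by (rule det_row_mul)
  finally have "det G = c^2 * det (\<chi> j. if j = jb then a j else (if j = ja then a j else r j))"
    by (simp add: power2_eq_square mult.assoc)
  then have eq: "charpoly A * det L = c^2 * det (\<chi> j. if j = jb then a j else (if j = ja then a j else r j))"
    using dG by simp
  have "c^2 dvd charpoly A * det L" by (rule dvdI[OF eq])
  then show ?thesis by (simp only: c_def L_def)
qed


lemma mult2:
  fixes A :: "real^4^4" and p q :: "real^4"
  assumes p: "norm p = 1" and q: "norm q = 1" and pq: "p \<bullet> q = 0"
    and ep: "A *v p = lam *\<^sub>R p" and eq: "A *v q = lam *\<^sub>R q" and nz: "charpoly A \<noteq> 0"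
  shows "2 \<le> order lam (charpoly A)"
proof -
  have pnq: "p \<noteq> q" using p pq by (metis inner_eq_zero_iff norm_zero zero_neq_one)
  have indpq: "independent {p, q}"
  proof (unfold independent_explicit, intro conjI allI impI ballI)
    show "finite {p, q}" by simp
    fix c v assume s: "(\<Sum>v\<in>{p, q}. c v *\<^sub>R v) = 0" and v: "v \<in> {p, q}"
    have s2: "c p *\<^sub>R p + c q *\<^sub>R q = 0" using s pnq by simp
    have pp: "p \<bullet> p = 1" "q \<bullet> q = 1" using p q by (metis power2_norm_eq_inner one_power2)+
    have h1: "p \<bullet> (c p *\<^sub>R p + c q *\<^sub>R q) = c p" using pp pq by (simp add: inner_add_right)
    have h2: "q \<bullet> (c p *\<^sub>R p + c q *\<^sub>R q) = c q" using pp pq by (simp add: inner_add_right inner_commute)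
    have "c p = 0" using h1 unfolding s2 by simp
    moreover have "c q = 0" using h2 unfolding s2 by simp
    ultimately show "c v = 0" using v by blast
  qed
  obtain B where B: "{p, q} \<subseteq> B" "independent B" "UNIV \<subseteq> span B"
    by (rule maximal_independent_subset_extend[OF subset_UNIV indpq])
  have cB: "card B = 4" using basis_card_eq_dim[OF subset_UNIV B(3) B(2)] by (simp add: DIM_cart)
  have finB: "finite B" using cB card_ge_0_finite by force
  have "card (B - {p, q}) = 2" using cB B(1) finB pnq by (simp add: card_Diff_subset)
  then obtain b3 b4 where b34: "B - {p, q} = {b3, b4}" "b3 \<noteq> b4" by (auto simp: card_2_iff)
  have Beq: "B = {p, q, b3, b4}" using b34 B(1) by blast
  have dist: "b3 \<noteq> p" "b3 \<noteq> q" "b4 \<noteq> p" "b4 \<noteq> q" using b34 by blast+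
  define col where "col = (\<lambda>j::4. if j = 1 then p else if j = 2 then q else if j = 3 then b3 else b4)"
  define P :: "real^4^4" where "P = (\<chi> i j. col j $ i)"
  have Pv: "P *v c = c$1 *\<^sub>R p + c$2 *\<^sub>R q + c$3 *\<^sub>R b3 + c$4 *\<^sub>R b4" for c
    by (simp add: vec_eq_iff P_def col_def matrix_vector_mult_def sum_4 algebra_simps)
  have AP: "(A ** P)$i$j = (A *v col j)$i" for i j
    by (simp add: P_def matrix_matrix_mult_def matrix_vector_mult_def)
  have detP: "det P \<noteq> 0"
  proof -
    have "c = 0" if c: "P *v c = 0" for c
    proof -
      define u where "u = (\<lambda>v. if v = p then c$1 else if v = q then c$2 else if v = b3 then c$3 else c$4)"
      have "(\<Sum>v\<in>B. u v *\<^sub>R v) = c$1 *\<^sub>R p + c$2 *\<^sub>R q + c$3 *\<^sub>R b3 + c$4 *\<^sub>R b4"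
        unfolding Beq using pnq dist b34(2) by (simp add: u_def algebra_simps)
      then have "(\<Sum>v\<in>B. u v *\<^sub>R v) = 0" using c Pv by simp
      then have "\<forall>v\<in>B. u v = 0" using B(2) unfolding independent_explicit by blast
      then have "c$1 = 0" "c$2 = 0" "c$3 = 0" "c$4 = 0"
        unfolding Beq u_def using pnq dist b34(2) by auto
      then show ?thesis by (simp add: vec_eq_iff forall_4)
    qed
    then show ?thesis
      by (simp add: invertible_det_nz[symmetric] invertible_left_inverse matrix_left_invertible_ker)
  qed
  have dv: "[:-lam, 1:]^2 dvd charpoly A * det (\<chi> i j. [:P$i$j:])"
  proof (rule charpoly_dvd[where ja=1 and jb=2])
    show "(1::4) \<noteq> 2" by simp
    show "\<forall>i. (A ** P) $ i $ 1 = lam * P $ i $ 1" using ep unfolding AP by (simp add: col_def P_def)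
    show "\<forall>i. (A ** P) $ i $ 2 = lam * P $ i $ 2" using eq unfolding AP by (simp add: col_def P_def)
  qed
  define L where "L = det (\<chi> i j. [:P$i$j:])"
  have pL: "poly L lam = det P" unfolding L_def poly_det by simp
  have L0: "L \<noteq> 0" using pL detP by auto
  have oL: "order lam L = 0" using pL detP by (simp add: order_0I)
  have nz2: "charpoly A * L \<noteq> 0" using nz L0 by simp
  have "2 \<le> order lam (charpoly A * L)" using dv nz2 unfolding L_def order_divides by simp
  also have "order lam (charpoly A * L) = order lam (charpoly A)" using order_mult[OF nz2] oL by simp
  finally show ?thesis .
qed

definition Mq :: "real^3 \<Rightarrow> real^3 \<Rightarrow> real^4^4" where
  "Mq x y = (\<chi> i j.
     if i = 1 \<and> j = 1 then y$1*x$1 + y$2*x$2 + y$3*x$3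
     else if i = 2 \<and> j = 2 then y$1*x$1 - y$2*x$2 - y$3*x$3
     else if i = 3 \<and> j = 3 then - y$1*x$1 + y$2*x$2 - y$3*x$3
     else if i = 4 \<and> j = 4 then - y$1*x$1 - y$2*x$2 + y$3*x$3
     else if (i = 1 \<and> j = 2) \<or> (i = 2 \<and> j = 1) then y$3*x$2 - y$2*x$3
     else if (i = 1 \<and> j = 3) \<or> (i = 3 \<and> j = 1) then y$1*x$3 - y$3*x$1
     else if (i = 1 \<and> j = 4) \<or> (i = 4 \<and> j = 1) then y$2*x$1 - y$1*x$2
     else if (i = 2 \<and> j = 3) \<or> (i = 3 \<and> j = 2) then y$1*x$2 + y$2*x$1
     else if (i = 2 \<and> j = 4) \<or> (i = 4 \<and> j = 2) then y$1*x$3 + y$3*x$1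
     else y$2*x$3 + y$3*x$2)"

lemma Mq_sym: "transpose (Mq x y) = Mq x y"
  unfolding Mq_def transpose_def
  by (rule vec_eq_iff[THEN iffD2], auto simp: vec_eq_iff forall_4)

lemma Mq_qf: "w \<bullet> (Mq x y *v w) = y \<bullet> (rotq w *v x)"
  unfolding Mq_def rotq_def Let_def
  by (simp add: inner_vec_def matrix_vector_mult_def sum_4 sum_3 algebra_simps power2_eq_square)

lemma rot_norm: "(norm (rotq w *v x))^2 = (w \<bullet> w)^2 * (norm x)^2"
  unfolding rotq_def Let_def
  unfolding power2_norm_eq_inner
  apply (simp add: inner_vec_def matrix_vector_mult_def sum_4 sum_3)
  by algebra


definition Qe :: "real^3 \<Rightarrow> real^3 \<Rightarrow> real^4^4" where
  "Qe x y = ((norm x)^2 + (norm y)^2) *\<^sub>R mat 1 - 2 *\<^sub>R Mq x y"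

lemma transpose_diff': "transpose (A - B) = transpose A - transpose (B::real^'n^'m)"
  by (simp add: transpose_def vec_eq_iff)

lemma Qe_sym: "transpose (Qe x y) = Qe x y"
  unfolding Qe_def transpose_diff' transpose_scalar Mq_sym by simp

lemma Qe_qf: "norm w = 1 \<Longrightarrow> w \<bullet> (Qe x y *v w) = (norm (y - rotq w *v x))^2"
proof -
  assume w: "norm w = 1"
  have ww: "w \<bullet> w = 1" using w by (metis power2_norm_eq_inner one_power2)
  have r: "(norm (rotq w *v x))^2 = (norm x)^2" using rot_norm[of w x] ww by simp
  have "(norm (y - rotq w *v x))^2 = (norm y)^2 - 2 * (y \<bullet> (rotq w *v x)) + (norm (rotq w *v x))^2"
    by (simp add: power2_norm_eq_inner inner_diff_left inner_diff_right inner_commute)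
  moreover have "w \<bullet> (Qe x y *v w) = ((norm x)^2 + (norm y)^2) * (w \<bullet> w) - 2 * (w \<bullet> (Mq x y *v w))"
    unfolding Qe_def by (simp add: matrix_vector_mult_diff_rdistrib inner_diff_right scaleR_matrix_vector_assoc[symmetric])
  ultimately show ?thesis using ww r Mq_qf[of w x y] by simp
qed

lemma Qmat_props:
  "transpose (Qmat x y) = Qmat x y \<and> (\<forall>w. norm w = 1 \<longrightarrow> w \<bullet> (Qmat x y *v w) = (norm (y - rotq w *v x))^2)"
proof -
  let ?P = "\<lambda>Q. transpose Q = Q \<and> (\<forall>w::real^4. norm w = 1 \<longrightarrow> w \<bullet> (Q *v w) = (norm (y - rotq w *v x))^2)"
  have ex: "?P (Qe x y)" using Qe_sym Qe_qf by blast
  have un: "Q = Qe x y" if "?P Q" for Q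
  proof (rule sym_eq_qf)
    show "transpose Q = Q" "transpose (Qe x y) = Qe x y" using that Qe_sym by auto
    show "\<forall>z. z \<bullet> (Q *v z) = z \<bullet> (Qe x y *v z)"
      using that Qe_qf by (intro allI qf_all_from_sphere) auto
  qed
  have "Qmat x y = Qe x y" unfolding Qmat_def using ex un by (rule the_equality)
  then show ?thesis using ex by simp
qed

lemma Qmat_psd: "0 \<le> z \<bullet> (Qmat x y *v z)"
proof (cases "z = 0")
  case True then show ?thesis by simp
next
  case False
  define u where "u = (1 / norm z) *\<^sub>R z"
  have u: "norm u = 1" using False by (simp add: u_def)
  have z: "z = norm z *\<^sub>R u" using False by (simp add: u_def)
  have "z \<bullet> (Qmat x y *v z) = (norm z)^2 * (u \<bullet> (Qmat x y *v u))" using z qf_scale by metis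
  also have "\<dots> \<ge> 0" using Qmat_props u by simp
  finally show ?thesis .
qed

lemma transpose_add': "transpose (A + B) = transpose A + transpose (B::real^'n^'m)"
  by (simp add: transpose_def vec_eq_iff)

lemma transpose_zero': "transpose (0::real^'n^'m) = 0"
  by (simp add: transpose_def vec_eq_iff)

lemma transpose_sum': "transpose (\<Sum>i\<in>I. f i) = (\<Sum>i\<in>I. transpose (f i :: real^'n^'m))"
  by (induction I rule: infinite_finite_induct) (simp_all add: transpose_add' transpose_zero')

lemma mv_sum: "(\<Sum>i\<in>I. f i) *v x = (\<Sum>i\<in>I. (f i :: real^'n^'m) *v x)"
  by (induction I rule: infinite_finite_induct) (simp_all add: matrix_vector_mult_add_rdistrib)

lemma qf_sum: "x \<bullet> ((\<Sum>i\<in>I. f i) *v x) = (\<Sum>i\<in>I. x \<bullet> ((f i :: real^'n^'n) *v x))"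
  by (simp add: mv_sum inner_sum_right)

lemma qf_conj:
  fixes V :: "real^'k^'n" and M :: "real^'n^'n" and u :: "real^'k"
  shows "u \<bullet> ((transpose V ** M ** V) *v u) = (V *v u) \<bullet> (M *v (V *v u))"
proof -
  have "(transpose V ** M ** V) *v u = transpose V *v (M *v (V *v u))"
    by (metis matrix_vector_mul_assoc)
  moreover have "u \<bullet> (transpose V *v y) = (V *v u) \<bullet> y" for y
    using inner_mv_transpose[of u "transpose V" y] by (simp only: transpose_transpose)
  ultimately show ?thesis by simp
qed

lemma qf_conj2:
  fixes V :: "real^'k^'n" and M :: "real^'k^'k" and x :: "real^'n"
  shows "x \<bullet> ((V ** M ** transpose V) *v x) = (transpose V *v x) \<bullet> (M *v (transpose V *v x))"
  using qf_conj[where V="transpose V" and M=M and u=x] by (simp only: transpose_transpose)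

lemma blk_qf:
  assumes "u$1 = z$1" "u$2 = z$2" "u$3 = z$3"
  shows "z \<bullet> (blk T *v z) = u \<bullet> (T *v u)"
  using assms
  by (simp add: blk_def idx43_def inner_vec_def matrix_vector_mult_def sum_4 sum_3 algebra_simps)

lemma hcat_comp:
  "(transpose (hcat V w) *v x) $ 1 = (transpose V *v x) $ 1"
  "(transpose (hcat V w) *v x) $ 2 = (transpose V *v x) $ 2"
  "(transpose (hcat V w) *v x) $ 3 = (transpose V *v x) $ 3"
  "(transpose (hcat V w) *v x) $ 4 = w \<bullet> x"
  by (simp_all only: transpose_matrix_vector vector_matrix_mult_def, simp_all add: hcat_def idx43_def inner_vec_def mult.commute)

lemma S_qf: "x \<bullet> ((hcat V w ** blk T ** transpose (hcat V w)) *v x) = (transpose V *v x) \<bullet> (T *v (transpose V *v x))"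
  unfolding qf_conj2 by (rule blk_qf) (simp_all only: hcat_comp)

lemma blk_transpose: "transpose (blk T) = blk (transpose T)"
  by (simp add: vec_eq_iff blk_def transpose_def idx43_def)

lemma S_sym: "transpose T = T \<Longrightarrow> transpose (hcat V w ** blk T ** transpose (hcat V w)) = hcat V w ** blk T ** transpose (hcat V w)"
  by (simp add: matrix_transpose_mul blk_transpose matrix_mul_assoc)


lemma decomp:
  fixes V0 :: "real^3^4" and w0 x :: "real^4"
  assumes hV1: "transpose V0 *v w0 = 0" and hV2: "transpose V0 ** V0 = mat 1" and hw: "norm w0 = 1"
  shows "x = V0 *v (transpose V0 *v x) + (w0 \<bullet> x) *\<^sub>R w0"
proof -
  define H where "H = hcat V0 w0"
  have e1: "(\<Sum>i\<in>UNIV. V0$i$a * V0$i$b) = (if a = b then 1 else 0)" for a b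
    using hV2 unfolding vec_eq_iff by (simp add: matrix_matrix_mult_def transpose_def mat_def)
  have e2: "(\<Sum>i\<in>UNIV. V0$i$a * w0$i) = 0" for a
  proof -
    have "(transpose V0 *v w0) $ a = 0" using hV1 by simp
    then show ?thesis by (simp only: transpose_matrix_vector vector_matrix_mult_def, simp add: mult.commute)
  qed
  have e2': "(\<Sum>i\<in>UNIV. w0$i * V0$i$a) = 0" for a using e2[of a] by (simp add: mult.commute)
  have e3: "(\<Sum>i\<in>UNIV. w0$i * w0$i) = 1"
    using hw by (metis inner_vec_def power2_norm_eq_inner one_power2 inner_real_def)
  have HtH: "transpose H ** H = mat 1"
    unfolding vec_eq_iff
    by (simp add: H_def hcat_def idx43_def matrix_matrix_mult_def transpose_def mat_def forall_4 e1 e2 e2' e3)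
  then have HHt: "H ** transpose H = mat 1" by (simp add: matrix_left_right_inverse)
  have "x = H *v (transpose H *v x)" by (simp only: matrix_vector_mul_assoc HHt matrix_vector_mul_lid)
  also have "\<dots> = V0 *v (transpose V0 *v x) + (w0 \<bullet> x) *\<^sub>R w0"
  proof -
    have c: "(transpose H *v x)$1 = (transpose V0 *v x)$1" "(transpose H *v x)$2 = (transpose V0 *v x)$2"
       "(transpose H *v x)$3 = (transpose V0 *v x)$3" "(transpose H *v x)$4 = w0 \<bullet> x"
      unfolding H_def by (simp_all only: hcat_comp)
    have Hz: "(H *v z)$i = V0$i$1*z$1 + V0$i$2*z$2 + V0$i$3*z$3 + w0$i*z$4" for z i
      by (simp add: H_def hcat_def idx43_def matrix_vector_mult_def sum_4)
    have Vu: "(V0 *v u)$i = V0$i$1*u$1 + V0$i$2*u$2 + V0$i$3*u$3" for u i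
      by (simp add: matrix_vector_mult_def sum_3)
    show ?thesis
      unfolding vec_eq_iff
      by (simp only: Hz Vu c vector_add_component vector_scaleR_component, simp add: algebra_simps)
  qed
  finally show ?thesis .
qed


lemma tls_local:
  fixes Q :: "nat \<Rightarrow> real^4^4" and w0 v :: "real^4"
  assumes sym: "\<forall>i. transpose (Q i) = Q i" and hw0: "norm w0 = 1"
    and hmin: "\<forall>w::real^4. norm w = 1 \<longrightarrow> tls_obj l Q c2 w0 \<le> tls_obj l Q c2 w"
    and hc: "\<forall>i\<in>{1..l}. w0 \<bullet> (Q i *v w0) < c2 i"
    and v: "w0 \<bullet> v = 0"
  shows "\<exists>d>0. \<forall>t. \<bar>t\<bar> < d \<longrightarrow> (w0 \<bullet> ((\<Sum>i=1..l. Q i) *v w0)) * (norm (w0 + t *\<^sub>R v))^2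
            \<le> (w0 + t *\<^sub>R v) \<bullet> ((\<Sum>i=1..l. Q i) *v (w0 + t *\<^sub>R v))"
proof -
  define n where "n = (norm v)^2"
  define g where "g = (\<lambda>i t. (w0 \<bullet> (Q i *v w0) + 2*t*(w0 \<bullet> (Q i *v v)) + t^2*(v \<bullet> (Q i *v v))) / (1 + t^2 * n))"
  have ww: "w0 \<bullet> w0 = 1" using hw0 by (metis power2_norm_eq_inner one_power2)
  have nrm: "(norm (w0 + t *\<^sub>R v))^2 = 1 + t^2 * n" for t
    unfolding power2_norm_eq_inner n_def using v ww
    by (simp add: inner_add_left inner_add_right inner_commute power2_eq_square)
  have npos: "1 + t^2 * n > 0" for t unfolding n_def
    by (simp add: add_pos_nonneg)
  have ev: "eventually (\<lambda>t. \<forall>i\<in>{1..l}. g i t < c2 i) (at 0)"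
  proof (rule eventually_ball_finite)
    show "finite {1..l}" by simp
    show "\<forall>i\<in>{1..l}. eventually (\<lambda>t. g i t < c2 i) (at 0)"
    proof
      fix i assume i: "i \<in> {1..l}"
      have "isCont (g i) 0" unfolding g_def
        by (intro continuous_intros) (use npos in auto)
      then have "(g i \<longlongrightarrow> g i 0) (at 0)" by (simp add: isCont_def)
      moreover have "g i 0 < c2 i" using hc i by (simp add: g_def)
      ultimately show "eventually (\<lambda>t. g i t < c2 i) (at 0)" by (rule order_tendstoD(2))
    qed
  qed
  then obtain d where d: "d > 0" "\<forall>t. t \<noteq> 0 \<and> dist t 0 < d \<longrightarrow> (\<forall>i\<in>{1..l}. g i t < c2 i)"
    unfolding eventually_at by auto
  have obj0: "tls_obj l Q c2 w0 = w0 \<bullet> ((\<Sum>i=1..l. Q i) *v w0)"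
    unfolding tls_obj_def qf_sum using hc by (intro sum.cong) auto
  show ?thesis
  proof (intro exI[of _ d] conjI allI impI)
    show "d > 0" by fact
    fix t :: real assume t: "\<bar>t\<bar> < d"
    show "(w0 \<bullet> ((\<Sum>i=1..l. Q i) *v w0)) * (norm (w0 + t *\<^sub>R v))^2
            \<le> (w0 + t *\<^sub>R v) \<bullet> ((\<Sum>i=1..l. Q i) *v (w0 + t *\<^sub>R v))"
    proof (cases "t = 0")
      case True then show ?thesis using ww by (simp add: power2_norm_eq_inner)
    next
      case False
      define u where "u = w0 + t *\<^sub>R v"
      define w where "w = (1 / norm u) *\<^sub>R u"
      have nu: "(norm u)^2 = 1 + t^2 * n" unfolding u_def by (rule nrm)
      have un: "norm u > 0" using nu npos[of t] by (metis norm_zero power_zero_numeral zero_less_norm_iff less_irrefl)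
      have wn: "norm w = 1" using un by (simp add: w_def)
      have qw: "w \<bullet> (M *v w) = (u \<bullet> (M *v u)) / (1 + t^2 * n)" for M :: "real^4^4"
        unfolding w_def qf_scale using nu by (simp add: power_divide)
      have gi: "g i t = w \<bullet> (Q i *v w)" for i
        unfolding qw g_def u_def using qf_add[of "Q i" w0 t v] sym by simp
      have lt: "\<forall>i\<in>{1..l}. w \<bullet> (Q i *v w) < c2 i"
        using d(2) False t by (simp add: gi[symmetric])
      have "tls_obj l Q c2 w = (\<Sum>i=1..l. w \<bullet> (Q i *v w))"
        unfolding tls_obj_def using lt by (intro sum.cong) auto
      also have "\<dots> = w \<bullet> ((\<Sum>i=1..l. Q i) *v w)" by (simp add: qf_sum)
      also have "\<dots> = (u \<bullet> ((\<Sum>i=1..l. Q i) *v u)) / (1 + t^2 * n)" by (rule qw)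
      finally have "w0 \<bullet> ((\<Sum>i=1..l. Q i) *v w0) \<le> (u \<bullet> ((\<Sum>i=1..l. Q i) *v u)) / (1 + t^2 * n)"
        using hmin wn obj0 by metis
      then show ?thesis using npos[of t] unfolding nu[unfolded u_def, symmetric] u_def
        by (simp add: pos_le_divide_eq nrm)
    qed
  qed
qed

theorem lemma3p8:
  fixes l :: nat
    and R0 :: "real^3^3"
    and x y eps :: "nat \<Rightarrow> real^3"
    and c2 :: "nat \<Rightarrow> real"
    and w0 :: "real^4"
    and V0 :: "real^3^4"
  defines "Q \<equiv> (\<lambda>i. Qmat (x i) (y i))"
  defines "zeta \<equiv> eig_min2 (\<Sum>i=1..l. Q i) / eig_min (\<Sum>i=1..l. Q i)"
  defines "d \<equiv> (\<lambda>i. (\<Sum>k=1..l. w0 \<bullet> (Q k *v w0)) / real l - w0 \<bullet> (Q i *v w0)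
                 + eig_max (\<Sum>j\<in>{1..l}-{i}. Q i - Q j) / (zeta * (real l - 1)))"
  defines "T \<equiv> (\<lambda>i. ((zeta - real l / (real l - 1)) / zeta) *\<^sub>R (transpose V0 ** Q i ** V0)
                 + (1 / (zeta * (real l - 1))) *\<^sub>R (\<Sum>j=1..l. transpose V0 ** Q j ** V0)
                 - ((\<Sum>k=1..l. w0 \<bullet> (Q k *v w0)) / real l) *\<^sub>R mat 1)"
  defines "S \<equiv> (\<lambda>i. hcat V0 w0 ** blk (T i) ** transpose (hcat V0 w0))"
  assumes hl: "l \<ge> 2"
    and hR0: "orthogonal_matrix R0" "det R0 = 1"
    and hy: "\<forall>i\<in>{1..l}. y i = R0 *v x i + eps i"
    and hc: "\<forall>i\<in>{1..l}. c2 i \<ge> 0"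
    and hw0: "norm w0 = 1"
    and hmin: "\<forall>w::real^4. norm w = 1 \<longrightarrow> tls_obj l Q c2 w0 \<le> tls_obj l Q c2 w"
    and hzeta: "zeta \<ge> real l / (real l - 1)"
    and hci: "\<forall>i\<in>{1..l}. c2 i > w0 \<bullet> (Q i *v w0) + norm (Q i *v w0) + (\<bar>d i\<bar> + d i) / 2"
    and hV1: "transpose V0 *v w0 = 0"
    and hV2: "transpose V0 ** V0 = mat 1"
  shows "(\<Sum>i=1..l. S i) = (\<Sum>i=1..l. Q i - (w0 \<bullet> (Q i *v w0)) *\<^sub>R mat 1)
         \<and> (\<forall>i\<in>{1..l}. psd (S i))
         \<and> (\<forall>i\<in>{1..l}. pd (S i + c2 i *\<^sub>R mat 1 - Q i))"
proof -
  have Qs: "\<forall>i. transpose (Q i) = Q i" using Qmat_props unfolding Q_def by blast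
  have Qp: "\<forall>i z. 0 \<le> z \<bullet> (Q i *v z)" using Qmat_psd unfolding Q_def by blast
  define A where "A = (\<Sum>i=1..l. Q i)"
  define mu where "mu = (\<Sum>k=1..l. w0 \<bullet> (Q k *v w0))"
  have As: "transpose A = A" unfolding A_def transpose_sum' using Qs by simp
  have Ap: "\<forall>z. 0 \<le> z \<bullet> (A *v z)" unfolding A_def qf_sum using Qp by (simp add: sum_nonneg)
  have muA: "mu = w0 \<bullet> (A *v w0)" unfolding mu_def A_def qf_sum ..
  have ww: "w0 \<bullet> w0 = 1" using hw0 by (metis power2_norm_eq_inner one_power2)
  have lge: "real l \<ge> 2" using hl by simp
  have hq: "\<forall>i\<in>{1..l}. w0 \<bullet> (Q i *v w0) < c2 i"
  proof
    fix i assume i: "i \<in> {1..l}"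
    have "0 \<le> (\<bar>d i\<bar> + d i) / 2" by simp
    moreover have "w0 \<bullet> (Q i *v w0) + norm (Q i *v w0) + (\<bar>d i\<bar> + d i) / 2 < c2 i" using hci i by blast
    ultimately show "w0 \<bullet> (Q i *v w0) < c2 i" using norm_ge_zero[of "Q i *v w0"] by linarith
  qed
  have loc: "\<exists>dd>0. \<forall>t. \<bar>t\<bar> < dd \<longrightarrow> (w0 \<bullet> (A *v w0)) * (norm (w0 + t *\<^sub>R v))^2 \<le> (w0 + t *\<^sub>R v) \<bullet> (A *v (w0 + t *\<^sub>R v))"
    if "w0 \<bullet> v = 0" for v
    using tls_local[OF Qs hw0 hmin hq that] unfolding A_def by blast
  have stat: "w0 \<bullet> (A *v v) = 0" if v: "w0 \<bullet> v = 0" for v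
  proof -
    obtain dd where "dd > 0" "\<forall>t. \<bar>t\<bar> < dd \<longrightarrow> (w0 \<bullet> (A *v w0)) * (norm (w0 + t *\<^sub>R v))^2 \<le> (w0 + t *\<^sub>R v) \<bullet> (A *v (w0 + t *\<^sub>R v))"
      using loc[OF v] by blast
    then show ?thesis using stat_dir[OF As hw0 v] by blast
  qed
  have Aw0: "A *v w0 = mu *\<^sub>R w0"
  proof -
    have "w0 \<bullet> (A *v w0 - (w0 \<bullet> (A *v w0)) *\<^sub>R w0) = 0"
      unfolding inner_diff_right inner_scaleR_right ww by simp
    then have "A *v w0 = (w0 \<bullet> (A *v w0)) *\<^sub>R w0" by (rule eig_from_stat[OF As hw0 stat])
    then show ?thesis using muA by simp
  qed
  have symA: "y1 \<bullet> (A *v y2) = y2 \<bullet> (A *v y1)" for y1 y2 by (rule sym_inner[OF As])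
  have perpA: "z \<bullet> (A *v w0) = 0" if "w0 \<bullet> z = 0" for z
    using that Aw0 by (simp add: inner_commute)
  define lam1 where "lam1 = eig_min A"
  note EP = sym_eig_props[OF As]
  obtain z1 where z1: "norm z1 = 1" "A *v z1 = lam1 *\<^sub>R z1" using EP(4) unfolding lam1_def by blast
  have z1z1: "z1 \<bullet> z1 = 1" using z1 by (metis power2_norm_eq_inner one_power2)
  have lam1_le: "lam1 \<le> mu" using EP(3) hw0 muA unfolding lam1_def by (metis mult.right_neutral one_power2)
  have mu_le: "mu \<le> lam1"
  proof (rule ccontr)
    assume "\<not> mu \<le> lam1"
    then have lt: "lam1 < mu" by simp
    have "lam1 * (z1 \<bullet> w0) = mu * (z1 \<bullet> w0)"
    proof -
      have "lam1 * (z1 \<bullet> w0) = (A *v z1) \<bullet> w0" using z1 by simp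
      also have "\<dots> = w0 \<bullet> (A *v z1)" by (simp add: inner_commute)
      also have "\<dots> = z1 \<bullet> (A *v w0)" by (rule symA)
      also have "\<dots> = mu * (z1 \<bullet> w0)" using Aw0 by simp
      finally show ?thesis .
    qed
    then have zw: "w0 \<bullet> z1 = 0" using lt by (simp add: inner_commute)
    obtain dd where dd: "dd > 0" "\<forall>t. \<bar>t\<bar> < dd \<longrightarrow> (w0 \<bullet> (A *v w0)) * (norm (w0 + t *\<^sub>R z1))^2 \<le> (w0 + t *\<^sub>R z1) \<bullet> (A *v (w0 + t *\<^sub>R z1))"
      using loc[OF zw] by blast
    define t where "t = dd / 2"
    have t: "\<bar>t\<bar> < dd" "t \<noteq> 0" using dd(1) by (auto simp: t_def)
    have n: "(norm (w0 + t *\<^sub>R z1))^2 = 1 + t^2"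
      unfolding power2_norm_eq_inner using zw ww z1z1
      by (simp add: inner_add_left inner_add_right inner_commute power2_eq_square)
    have q: "(w0 + t *\<^sub>R z1) \<bullet> (A *v (w0 + t *\<^sub>R z1)) = mu + t^2 * lam1"
      unfolding qf_add[OF As] using z1 zw z1z1 muA by simp
    have "mu * (1 + t^2) \<le> mu + t^2 * lam1" using dd(2) t(1) n q muA by metis
    then have "t^2 * mu \<le> t^2 * lam1" by (simp add: algebra_simps)
    then have "mu \<le> lam1" using t(2) by simp
    then show False using lt by simp
  qed
  have mul: "mu = lam1" using lam1_le mu_le by simp
  have lam1_nn: "lam1 \<ge> 0" using Ap[rule_format, of z1] z1 z1z1 by simp
  define lam2 where "lam2 = eig_min2 A"
  have zeta_eq: "zeta = lam2 / lam1" unfolding zeta_def lam2_def lam1_def A_def ..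
  have lfrac: "real l / (real l - 1) > 1" using lge by simp
  have zpos: "zeta > 1" using hzeta lfrac by simp
  have lam1_pos: "lam1 > 0"
  proof (rule ccontr)
    assume "\<not> lam1 > 0"
    then have "lam1 = 0" using lam1_nn by simp
    then have "zeta = 0" using zeta_eq by simp
    then show False using zpos by simp
  qed
  have V0perp: "w0 \<bullet> (V0 *v u) = 0" for u
    using inner_mv_transpose[of w0 V0 u] hV1 by simp
  have V0norm: "(V0 *v u) \<bullet> (V0 *v u) = u \<bullet> u" for u
    using inner_mv_transpose[of "V0 *v u" V0 u] hV2 by (simp add: matrix_vector_mul_assoc)
  have compl: "\<forall>yy. w0 \<bullet> yy = 0 \<longrightarrow> lam2 * (yy \<bullet> yy) \<le> yy \<bullet> (A *v yy)"
  proof -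
    define Sp where "Sp = sphere (0::real^4) 1 \<inter> {yy. w0 \<bullet> yy = 0}"
    have cSp: "compact Sp" unfolding Sp_def by (intro compact_Int_closed compact_sphere closed_hyperplane)
    define e where "e = V0 *v axis 1 (1::real)"
    have ee: "e \<bullet> e = 1" unfolding e_def V0norm by (simp add: inner_axis_axis)
    have eS: "e \<in> Sp" unfolding Sp_def using ee V0perp[of "axis 1 1"]
      by (simp add: e_def norm_eq_sqrt_inner)
    have co: "continuous_on Sp (\<lambda>x. x \<bullet> (A *v x))"
      by (intro continuous_intros linear_continuous_on matrix_vector_mul_linear)
    obtain x1 where x1: "x1 \<in> Sp" "\<forall>yy\<in>Sp. x1 \<bullet> (A *v x1) \<le> yy \<bullet> (A *v yy)"
      using continuous_attains_inf[OF cSp _ co] eS by blast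
    define nu where "nu = x1 \<bullet> (A *v x1)"
    have x1n: "norm x1 = 1" "w0 \<bullet> x1 = 0" using x1(1) unfolding Sp_def by auto
    have x1x1: "x1 \<bullet> x1 = 1" using x1n by (metis power2_norm_eq_inner one_power2)
    have nuall: "nu * (yy \<bullet> yy) \<le> yy \<bullet> (A *v yy)" if yw: "w0 \<bullet> yy = 0" for yy
    proof (cases "yy = 0")
      case True then show ?thesis by simp
    next
      case False
      define uu where "uu = (1 / norm yy) *\<^sub>R yy"
      have uu: "uu \<in> Sp" using False yw unfolding Sp_def uu_def by simp
      have z: "yy = norm yy *\<^sub>R uu" using False by (simp add: uu_def)
      have "yy \<bullet> (A *v yy) = (norm yy)^2 * (uu \<bullet> (A *v uu))" using z qf_scale by metis
      moreover have "nu \<le> uu \<bullet> (A *v uu)" using x1(2) uu unfolding nu_def by blast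
      moreover have "nu * (norm yy)^2 \<le> (uu \<bullet> (A *v uu)) * (norm yy)^2"
        using calculation(2) by (rule mult_right_mono) simp
      ultimately show ?thesis by (simp add: power2_norm_eq_inner mult.commute)
    qed
    have Ax1: "A *v x1 = nu *\<^sub>R x1"
    proof -
      define r where "r = A *v x1 - nu *\<^sub>R x1"
      have xr: "x1 \<bullet> r = 0" unfolding r_def nu_def inner_diff_right inner_scaleR_right x1x1 by simp
      have wr: "w0 \<bullet> r = 0"
      proof -
        have "w0 \<bullet> (A *v x1) = x1 \<bullet> (A *v w0)" by (rule symA)
        also have "\<dots> = 0" using perpA x1n(2) by blast
        finally show ?thesis unfolding r_def inner_diff_right inner_scaleR_right x1n(2) by simp
      qed
      have "x1 \<bullet> (A *v r) = 0"
      proof (rule stat_dir[OF As x1n(1) xr zero_less_one], intro allI impI)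
        fix t :: real
        have "w0 \<bullet> (x1 + t *\<^sub>R r) = 0" using x1n(2) wr by (simp add: inner_add_right)
        then show "x1 \<bullet> (A *v x1) * (norm (x1 + t *\<^sub>R r))\<^sup>2 \<le> (x1 + t *\<^sub>R r) \<bullet> (A *v (x1 + t *\<^sub>R r))"
          using nuall unfolding nu_def power2_norm_eq_inner by blast
      qed
      then show ?thesis using eig_from_stat[OF As x1n(1)] unfolding r_def nu_def by blast
    qed
    have nuroot: "poly (charpoly A) nu = 0" using root_iff x1n(1) Ax1 by (metis norm_zero zero_neq_one)
    have lam1nu: "lam1 \<le> nu" using EP(5) nuroot unfolding lam1_def by blast
    have "lam2 \<le> nu"
    proof (cases "order lam1 (charpoly A) \<ge> 2")
      case True
      then have "lam2 = lam1" unfolding lam2_def eig_min2_def lam1_def by simp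
      then show ?thesis using lam1nu by simp
    next
      case False
      have "nu \<noteq> lam1"
      proof
        assume nl: "nu = lam1"
        have "2 \<le> order lam1 (charpoly A)"
          by (rule mult2[OF hw0 x1n(1) x1n(2) _ _ EP(1)]) (use Aw0 mul Ax1 nl in simp_all)
        then show False using False by simp
      qed
      then have nuin: "nu \<in> {t. poly (charpoly A) t = 0 \<and> t > lam1}" using lam1nu nuroot by auto
      have fin: "finite {t. poly (charpoly A) t = 0 \<and> t > lam1}"
        by (rule finite_subset[OF _ EP(2)]) auto
      have "lam2 = Min {t. poly (charpoly A) t = 0 \<and> t > lam1}"
        using False unfolding lam2_def eig_min2_def lam1_def by simp
      then show ?thesis using Min_le[OF fin nuin] by simp
    qed
    then show ?thesis using nuall by (meson inner_ge_zero mult_right_mono order_trans)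
  qed
  define a where "a = (zeta - real l / (real l - 1)) / zeta"
  define b where "b = 1 / (zeta * (real l - 1))"
  have a_nn: "a \<ge> 0" unfolding a_def using hzeta zpos by simp
  have b_pos: "b > 0" unfolding b_def using zpos lge by simp
  have ab: "a = 1 - real l * b" unfolding a_def b_def using zpos lge by (simp add: field_simps)
  have blam2: "b * lam2 = lam1 / (real l - 1)"
    unfolding b_def zeta_eq using lam1_pos lge zpos zeta_eq by (simp add: field_simps)
  have Tqf: "u \<bullet> (T i *v u) = a * ((V0 *v u) \<bullet> (Q i *v (V0 *v u))) + b * ((V0 *v u) \<bullet> (A *v (V0 *v u))) - (mu / real l) * (u \<bullet> u)" for i u
  proof -
    have s1: "u \<bullet> ((\<Sum>j=1..l. transpose V0 ** Q j ** V0) *v u) = (V0 *v u) \<bullet> (A *v (V0 *v u))"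
      unfolding qf_sum qf_conj A_def ..
    show ?thesis
      unfolding T_def a_def[symmetric] b_def[symmetric] mu_def[symmetric] using s1
      by (simp add: matrix_vector_mult_diff_rdistrib matrix_vector_mult_add_rdistrib
          scaleR_matrix_vector_assoc[symmetric] inner_diff_right inner_add_right qf_conj)
  qed
  have Tsym: "transpose (T i) = T i" for i
    unfolding T_def using Qs
    by (simp add: transpose_diff' transpose_add' transpose_scalar transpose_sum' matrix_transpose_mul matrix_mul_assoc)
  have Sqf: "z \<bullet> (S i *v z) = (transpose V0 *v z) \<bullet> (T i *v (transpose V0 *v z))" for i z
    unfolding S_def by (rule S_qf)
  have Ssym: "transpose (S i) = S i" for i
    unfolding S_def by (rule S_sym[OF Tsym])
  have Tpsd: "0 \<le> u \<bullet> (T i *v u)" for i u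
  proof -
    have "0 \<le> a * ((V0 *v u) \<bullet> (Q i *v (V0 *v u)))" using a_nn Qp by simp
    moreover have "b * (lam2 * (u \<bullet> u)) \<le> b * ((V0 *v u) \<bullet> (A *v (V0 *v u)))"
      using compl V0perp V0norm b_pos by (metis mult_left_mono less_imp_le)
    moreover have "b * (lam2 * (u \<bullet> u)) = lam1 / (real l - 1) * (u \<bullet> u)" using blam2 by (metis mult.assoc)
    moreover have "(mu / real l) * (u \<bullet> u) \<le> lam1 / (real l - 1) * (u \<bullet> u)"
      using mul lam1_pos lge by (intro mult_right_mono) (simp_all add: frac_le)
    ultimately show ?thesis unfolding Tqf by linarith
  qed
  have claim2: "\<forall>i\<in>{1..l}. psd (S i)"
    unfolding psd_def using Ssym Sqf Tpsd by simp
  have dec: "z = V0 *v (transpose V0 *v z) + (w0 \<bullet> z) *\<^sub>R w0" for z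
    by (rule decomp[OF hV1 hV2 hw0])
  have zz: "z \<bullet> z = (transpose V0 *v z) \<bullet> (transpose V0 *v z) + (w0 \<bullet> z)^2" for z
  proof -
    define yv where "yv = V0 *v (transpose V0 *v z)"
    have "z \<bullet> z = (yv + (w0 \<bullet> z) *\<^sub>R w0) \<bullet> (yv + (w0 \<bullet> z) *\<^sub>R w0)"
      using dec[of z] unfolding yv_def by simp
    also have "\<dots> = yv \<bullet> yv + (w0 \<bullet> z)^2"
      using V0perp[of "transpose V0 *v z"] ww unfolding yv_def[symmetric]
      by (simp add: inner_add_left inner_add_right inner_commute power2_eq_square)
    finally show ?thesis unfolding yv_def V0norm .
  qed
  have Az: "z \<bullet> (A *v z) = (V0 *v (transpose V0 *v z)) \<bullet> (A *v (V0 *v (transpose V0 *v z))) + (w0 \<bullet> z)^2 * mu" for z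
  proof -
    have "z \<bullet> (A *v z) = (V0 *v (transpose V0 *v z) + (w0 \<bullet> z) *\<^sub>R w0) \<bullet> (A *v (V0 *v (transpose V0 *v z) + (w0 \<bullet> z) *\<^sub>R w0))"
      using dec[of z] by simp
    also have "\<dots> = (V0 *v (transpose V0 *v z)) \<bullet> (A *v (V0 *v (transpose V0 *v z))) + (w0 \<bullet> z)^2 * mu"
      unfolding qf_add[OF As] using perpA[OF V0perp] muA by simp
    finally show ?thesis .
  qed
  have claim1: "(\<Sum>i=1..l. S i) = (\<Sum>i=1..l. Q i - (w0 \<bullet> (Q i *v w0)) *\<^sub>R mat 1)"
  proof (rule sym_eq_qf)
    show "transpose (\<Sum>i=1..l. S i) = (\<Sum>i=1..l. S i)" unfolding transpose_sum' using Ssym by simp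
    show "transpose (\<Sum>i=1..l. Q i - (w0 \<bullet> (Q i *v w0)) *\<^sub>R mat 1) = (\<Sum>i=1..l. Q i - (w0 \<bullet> (Q i *v w0)) *\<^sub>R mat 1)"
      unfolding transpose_sum' transpose_diff' transpose_scalar using Qs by simp
    show "\<forall>z. z \<bullet> ((\<Sum>i=1..l. S i) *v z) = z \<bullet> ((\<Sum>i=1..l. Q i - (w0 \<bullet> (Q i *v w0)) *\<^sub>R mat 1) *v z)"
    proof
      fix z :: "real^4"
      define u where "u = transpose V0 *v z"
      define R where "R = (V0 *v u) \<bullet> (A *v (V0 *v u))"
      have sP: "(\<Sum>i=1..l. (V0 *v u) \<bullet> (Q i *v (V0 *v u))) = R"
        unfolding R_def A_def qf_sum ..
      have "z \<bullet> ((\<Sum>i=1..l. S i) *v z) = (\<Sum>i=1..l. u \<bullet> (T i *v u))"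
        unfolding qf_sum Sqf u_def ..
      also have "\<dots> = (\<Sum>i=1..l. a * ((V0 *v u) \<bullet> (Q i *v (V0 *v u))) + b * R - (mu / real l) * (u \<bullet> u))"
        unfolding Tqf R_def ..
      also have "\<dots> = a * R + real l * b * R - real l * (mu / real l) * (u \<bullet> u)"
        using sP by (simp add: sum.distrib sum_subtractf sum_distrib_left[symmetric])
      also have "\<dots> = (a + real l * b) * R - (real l * (mu / real l)) * (u \<bullet> u)"
        by (simp only: distrib_right mult.assoc)
      also have "\<dots> = R - mu * (u \<bullet> u)"
      proof -
        have "a + real l * b = 1" using ab by simp
        moreover have "real l * (mu / real l) = mu" using lge by simp
        ultimately show ?thesis by simp
      qed
      finally have L: "z \<bullet> ((\<Sum>i=1..l. S i) *v z) = R - mu * (u \<bullet> u)" .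
      have "z \<bullet> ((\<Sum>i=1..l. Q i - (w0 \<bullet> (Q i *v w0)) *\<^sub>R mat 1) *v z)
            = (\<Sum>i=1..l. z \<bullet> (Q i *v z) - (w0 \<bullet> (Q i *v w0)) * (z \<bullet> z))"
        unfolding qf_sum by (simp add: matrix_vector_mult_diff_rdistrib scaleR_matrix_vector_assoc[symmetric] inner_diff_right)
      also have "\<dots> = z \<bullet> (A *v z) - mu * (z \<bullet> z)"
        unfolding A_def mu_def qf_sum by (simp add: sum_subtractf sum_distrib_right)
      also have "\<dots> = R - mu * (u \<bullet> u)"
        unfolding R_def u_def by (simp only: Az[of z] zz[of z]) (simp add: algebra_simps)
      finally show "z \<bullet> ((\<Sum>i=1..l. S i) *v z) = z \<bullet> ((\<Sum>i=1..l. Q i - (w0 \<bullet> (Q i *v w0)) *\<^sub>R mat 1) *v z)"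
        using L by simp
    qed
  qed
  have claim3: "\<forall>i\<in>{1..l}. pd (S i + c2 i *\<^sub>R mat 1 - Q i)"
  proof
    fix i assume i: "i \<in> {1..l}"
    define E where "E = (\<Sum>j\<in>{1..l}-{i}. Q i - Q j)"
    have Esym: "transpose E = E" unfolding E_def transpose_sum' transpose_diff' using Qs by simp
    define Lam where "Lam = eig_max E"
    have Lamb: "vv \<bullet> (E *v vv) \<le> Lam * (norm vv)^2" for vv
      using sym_eig_props(6)[OF Esym] unfolding Lam_def by blast
    have cardi: "card ({1..l}-{i}) = l - 1" using i by simp
    have qE: "vv \<bullet> (E *v vv) = real l * (vv \<bullet> (Q i *v vv)) - vv \<bullet> (A *v vv)" for vv
    proof -
      have "vv \<bullet> (E *v vv) = (\<Sum>j\<in>{1..l}-{i}. vv \<bullet> (Q i *v vv) - vv \<bullet> (Q j *v vv))"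
        unfolding E_def qf_sum by (simp add: matrix_vector_mult_diff_rdistrib inner_diff_right)
      also have "\<dots> = real (l - 1) * (vv \<bullet> (Q i *v vv)) - (\<Sum>j\<in>{1..l}-{i}. vv \<bullet> (Q j *v vv))"
        using cardi by (simp add: sum_subtractf)
      also have "(\<Sum>j\<in>{1..l}-{i}. vv \<bullet> (Q j *v vv)) = vv \<bullet> (A *v vv) - vv \<bullet> (Q i *v vv)"
        unfolding A_def qf_sum using i by (simp add: sum_diff1)
      finally show ?thesis using hl by (simp add: of_nat_diff algebra_simps)
    qed
    have dI: "d i = mu / real l - w0 \<bullet> (Q i *v w0) + b * Lam"
      unfolding d_def mu_def b_def Lam_def E_def by simp
    show "pd (S i + c2 i *\<^sub>R mat 1 - Q i)"
      unfolding pd_def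
    proof (intro conjI allI impI)
      show "transpose (S i + c2 i *\<^sub>R mat 1 - Q i) = S i + c2 i *\<^sub>R mat 1 - Q i"
        using Ssym Qs by (simp add: transpose_diff' transpose_add' transpose_scalar)
      fix z :: "real^4" assume z0: "z \<noteq> 0"
      define u where "u = transpose V0 *v z"
      define yv where "yv = V0 *v u"
      define s where "s = w0 \<bullet> z"
      define P where "P = yv \<bullet> (Q i *v yv)"
      define R where "R = yv \<bullet> (A *v yv)"
      define U where "U = u \<bullet> u"
      define q where "q = w0 \<bullet> (Q i *v w0)"
      define nn where "nn = norm (Q i *v w0)"
      define zw where "zw = yv \<bullet> (Q i *v w0)"
      define c where "c = c2 i"
      define dp where "dp = (\<bar>d i\<bar> + d i) / 2"
      have zd: "z = yv + s *\<^sub>R w0" using dec[of z] unfolding yv_def u_def s_def .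
      have zzU: "z \<bullet> z = U + s^2" using zz[of z] unfolding U_def u_def s_def .
      have yy: "yv \<bullet> yv = U" unfolding yv_def U_def V0norm ..
      have ny: "(norm yv)^2 = U" using yy by (simp add: power2_norm_eq_inner)
      have pos: "U + s^2 > 0" using z0 zzU by (metis inner_gt_zero_iff)
      have qS: "z \<bullet> (S i *v z) = a * P + b * R - (mu / real l) * U"
        unfolding Sqf Tqf P_def R_def U_def yv_def u_def ..
      have qQ: "z \<bullet> (Q i *v z) = P + 2 * s * zw + s^2 * q"
        unfolding zd qf_add[of "Q i", OF Qs[rule_format]] P_def zw_def q_def ..
      have LHS: "z \<bullet> ((S i + c2 i *\<^sub>R mat 1 - Q i) *v z) = a * P + b * R - (mu / real l) * U + c * (U + s^2) - (P + 2 * s * zw + s^2 * q)"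
        using qS qQ zzU unfolding c_def
        by (simp add: matrix_vector_mult_diff_rdistrib matrix_vector_mult_add_rdistrib
            scaleR_matrix_vector_assoc[symmetric] inner_diff_right inner_add_right)
      have F1: "0 \<le> b * (Lam * U) - b * (real l * P - R)"
      proof -
        have "real l * P - R \<le> Lam * U" using Lamb[of yv] qE[of yv] ny unfolding P_def R_def by simp
        then show ?thesis using b_pos by (simp add: right_diff_distrib[symmetric] mult_left_mono)
      qed
      have F2: "0 \<le> dp * (U + s^2) - d i * U"
      proof (cases "d i \<ge> 0")
        case True
        then have "dp = d i" unfolding dp_def by simp
        then show ?thesis using True by (simp add: algebra_simps)
      next
        case False
        then have "dp = 0" unfolding dp_def by simp
        moreover have "d i * U \<le> 0" using False yy[symmetric] inner_ge_zero[of yv]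
          by (simp add: mult_nonpos_nonneg)
        ultimately show ?thesis by simp
      qed
      have F3: "0 \<le> nn * (U + s^2) - 2 * s * zw"
      proof -
        have nnn: "nn \<ge> 0" unfolding nn_def by simp
        have "\<bar>zw\<bar> \<le> norm yv * nn" unfolding zw_def nn_def by (rule Cauchy_Schwarz_ineq2)
        then have "\<bar>s\<bar> * \<bar>zw\<bar> \<le> \<bar>s\<bar> * (norm yv * nn)" by (rule mult_left_mono) simp
        moreover have "s * zw \<le> \<bar>s\<bar> * \<bar>zw\<bar>" by (metis abs_ge_self abs_mult)
        ultimately have "2 * s * zw \<le> 2 * \<bar>s\<bar> * (norm yv * nn)" by linarith
        also have "\<dots> = (2 * \<bar>s\<bar> * norm yv) * nn" by simp
        also have "\<dots> \<le> (U + s^2) * nn"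
        proof (rule mult_right_mono[OF _ nnn])
          have "0 \<le> (\<bar>s\<bar> - norm yv)^2" by simp
          then show "2 * \<bar>s\<bar> * norm yv \<le> U + s^2" using ny
            by (simp add: power2_eq_square algebra_simps)
        qed
        finally show ?thesis by (simp add: mult.commute)
      qed
      have F4: "0 < (c - q - nn - dp) * (U + s^2)"
      proof -
        have "c > q + nn + dp" using hci i unfolding c_def q_def nn_def dp_def by blast
        then show ?thesis using pos by simp
      qed
      have G: "b * (Lam * U) = (d i - mu / real l + q) * U" using dI unfolding q_def by (simp add: algebra_simps)
      have ident: "a * P + b * R - (mu / real l) * U + c * (U + s^2) - (P + 2 * s * zw + s^2 * q)
          = (c - q - nn - dp) * (U + s^2) + (nn * (U + s^2) - 2 * s * zw) + (dp * (U + s^2) - d i * U)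
            + (b * (Lam * U) - b * (real l * P - R))"
        unfolding G ab by (simp add: algebra_simps)
      show "0 < z \<bullet> ((S i + c2 i *\<^sub>R mat 1 - Q i) *v z)"
        unfolding LHS ident by (intro add_pos_nonneg F1 F2 F3 F4)
    qed
  qed
  show ?thesis using claim1 claim2 claim3 by blast
qed


end
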